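(* Consider the following regulation game. A random triple $(\theta,s,d)$ (agent type, training state, deployment state) has joint distribution $\pi$. Prediction functions are vectors $f\in\mathbb{R}^n$. Given $s$ (and $\theta$), expected agent utility and expected principal welfare are $\overline{U}_\theta(f;s) = -(f-\bar u)'\overline{\Omega}_U(f-\bar u)$ and $\overline{W}(f;s) = -(f-\bar w)'\overline{\Omega}_W(f-\bar w)$, with bliss points $\bar u=\bar u(s,\theta)$, $\bar w=\bar w(s)\in\mathbb{R}^n$ and symmetric positive semidefinite weight matrices. The principal first (knowing only $\pi$) chooses a linear explainer, i.e. a $k\times n$ real matrix $\mathcal{E}$, and possibly an ex-ante restriction $\mathcal{F}=\{f: Af=a\}$ with $A\in\mathbb{R}^{m\times n}$, $a\in\mathbb{R}^m$ not depending on $s,\theta$; after observing $s$ she dictates the value $\mathcal{E}f=e(s)$ of the explanation (failing the audit has infinite cost to the agent). The agent, knowing $\theta$ and $s$, chooses $f$ maximizing $\overline{U}_\theta(f;s)$ subject to $Af=a$ and $\mathcal{E}f=e(s)$. Assume $\overline{\Omega}_U$ is fixed (non-random) and of full rank, and that $\operatorname{rank}\mathop{E}_\pi[(\bar u-\bar w)(\bar u-\bar w)']\le k$. Then there is an explainer that achieves the first-best solution $f=\bar w$ of the principal, yielding maximal expected welfare $\overline{W}(f;s)\equiv 0$ across all states and for all agent types. Further, the optimal solution does not include any ex-ante restrictions.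
   Context: The first-best solution is the principal's bliss point $f=\bar w(s)$. *)

theory Defs
  imports "HOL-Probability.Probability"
begin

definition quad_payoff :: "real^'n^'n \<Rightarrow> real^'n \<Rightarrow> real^'n \<Rightarrow> real" where
  "quad_payoff Om b f = - ((f - b) \<bullet> (Om *v (f - b)))"

definition psd_matrix :: "real^'n^'n \<Rightarrow> bool" where
  "psd_matrix M \<longleftrightarrow> transpose M = M \<and> (\<forall>x. 0 \<le> x \<bullet> (M *v x))"

definition outer :: "real^'n \<Rightarrow> real^'n^'n" where
  "outer v = (\<chi> i j. v $ i * v $ j)"

definition agent_optimal :: "real^'n^'n \<Rightarrow> real^'n \<Rightarrow> (real^'n) set \<Rightarrow> real^'n \<Rightarrow> bool" where
  "agent_optimal OmU ub C f \<longleftrightarrow> f \<in> C \<and> (\<forall>g\<in>C. quad_payoff OmU ub g \<le> quad_payoff OmU ub f)"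

end

theory Submission
  imports Defs
begin

lemma inner_transp: "(x::real^'n) \<bullet> (A *v y) = (transpose A *v x) \<bullet> y"
  by (metis dot_lmul_matrix vector_transpose_matrix transpose_transpose)

lemma quad_transp: "(x::real^'n) \<bullet> (transpose A *v x) = x \<bullet> (A *v x)"
  by (metis inner_transp inner_commute transpose_transpose)

lemma sym_inner: "transpose M = M \<Longrightarrow> (x::real^'n) \<bullet> (M *v y) = y \<bullet> (M *v x)"
  by (metis inner_transp inner_commute)

lemma quad_outer: "(v::real^'n) \<bullet> (outer d *v v) = (v \<bullet> d)^2"
  by (simp add: outer_def matrix_vector_mult_def inner_vec_def power2_eq_square
      sum_distrib_left sum_distrib_right sum_product algebra_simps)

lemma bl_quad: "bounded_linear (\<lambda>A::real^'n^'n. v \<bullet> (A *v v))"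
  unfolding linear_conv_bounded_linear[symmetric]
  by (rule linearI) (simp_all add: matrix_vector_mult_def inner_vec_def algebra_simps
      sum.distrib sum_distrib_left)

lemma psd_zero:
  assumes "psd_matrix M" "(x::real^'n) \<bullet> (M *v x) = 0"
  shows "M *v x = 0"
proof -
  have sym: "transpose M = M" and nn: "\<And>z. 0 \<le> z \<bullet> (M *v z)" using assms(1) by (auto simp: psd_matrix_def)
  define y where "y = M *v x"
  define c where "c = y \<bullet> y"
  define Q where "Q = y \<bullet> (M *v y)"
  have Q0: "0 \<le> Q" using nn by (simp add: Q_def)
  have c0: "0 \<le> c" by (simp add: c_def)
  have key: "0 \<le> 2 * t * c + t^2 * Q" for t :: real
  proof -
    have "0 \<le> (x + t *\<^sub>R y) \<bullet> (M *v (x + t *\<^sub>R y))" by (rule nn)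
    also have "\<dots> = x \<bullet> (M *v x) + t * (x \<bullet> (M *v y)) + t * (y \<bullet> (M *v x)) + t^2 * Q"
      by (simp add: matrix_vector_right_distrib matrix_vector_mult_scaleR inner_add_left
          inner_add_right Q_def power2_eq_square algebra_simps)
    also have "x \<bullet> (M *v y) = y \<bullet> (M *v x)" by (rule sym_inner[OF sym])
    finally show ?thesis using assms(2) by (simp add: y_def c_def)
  qed
  have "c = 0"
  proof (rule ccontr)
    assume "c \<noteq> 0"
    with c0 have cp: "c > 0" by simp
    define s where "s = c / (Q + 1)"
    have sp: "s > 0" using cp Q0 by (simp add: s_def)
    have "0 \<le> s * (s * Q - 2 * c)" using key[of "-s"] by (simp add: power2_eq_square algebra_simps)
    then have "s * Q - 2 * c \<ge> 0" using sp by (simp add: zero_le_mult_iff)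
    moreover have "s * Q \<le> c"
    proof -
      have "s * Q = c * (Q / (Q + 1))" by (simp add: s_def)
      also have "\<dots> \<le> c * 1" using cp Q0 by (intro mult_left_mono) auto
      finally show ?thesis by simp
    qed
    ultimately show False using cp by simp
  qed
  then show ?thesis by (simp add: c_def y_def)
qed


lemma ae_in_span:
  fixes \<pi> :: "'a measure" and D :: "'a \<Rightarrow> real^'n"
  assumes int: "integrable \<pi> (\<lambda>x. outer (D x))"
  shows "AE x in \<pi>. D x \<in> span (range (\<lambda>t. integral\<^sup>L \<pi> (\<lambda>x. outer (D x)) *v t))"
proof -
  define Mm where "Mm = integral\<^sup>L \<pi> (\<lambda>x. outer (D x))"
  define R where "R = range (\<lambda>t. Mm *v t)"
  define N where "N = {z. \<forall>w\<in>span R. orthogonal z w}"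
  have zero: "AE x in \<pi>. z \<bullet> D x = 0" if "z \<in> N" for z
  proof -
    have "z \<bullet> (Mm *v z) = 0"
    proof -
      have "orthogonal z (Mm *v (transpose Mm *v z))"
        using that by (auto simp: N_def R_def span_base)
      then have "(transpose Mm *v z) \<bullet> (transpose Mm *v z) = 0"
        by (simp add: orthogonal_def inner_transp)
      then have "transpose Mm *v z = 0" by simp
      then show ?thesis by (metis quad_transp inner_zero_right)
    qed
    moreover have "z \<bullet> (Mm *v z) = integral\<^sup>L \<pi> (\<lambda>x. (z \<bullet> D x)^2)"
      unfolding Mm_def
      using integral_bounded_linear[OF bl_quad[of z] int] by (simp add: quad_outer)
    moreover have "integrable \<pi> (\<lambda>x. (z \<bullet> D x)^2)"
      using integrable_bounded_linear[OF bl_quad[of z] int] by (simp add: quad_outer)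
    ultimately have "AE x in \<pi>. (z \<bullet> D x)^2 = 0"
      using integral_nonneg_eq_0_iff_AE[of \<pi> "\<lambda>x. (z \<bullet> D x)^2"] by simp
    then show ?thesis by simp
  qed
  obtain B where B: "B \<subseteq> N" "independent B" "N \<subseteq> span B" "card B = dim N"
    using basis_exists by blast
  have fB: "finite B" using B(2) independent_bound by blast
  have "AE x in \<pi>. \<forall>b\<in>B. b \<bullet> D x = 0"
    using fB B(1) zero by (intro AE_finite_allI) auto
  then show ?thesis
  proof (rule AE_mp, intro AE_I2 impI)
    fix x assume H: "\<forall>b\<in>B. b \<bullet> D x = 0"
    obtain y z where yz: "y \<in> span R" "\<And>w. w \<in> span R \<Longrightarrow> orthogonal z w" "D x = y + z"
      using orthogonal_subspace_decomp_exists[of R "D x"] by metis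
    have "z \<in> N" using yz(2) by (auto simp: N_def)
    then have "z \<in> span B" using B(3) by blast
    then have "orthogonal (D x) z"
      using orthogonal_to_span[of z B "D x"] H by (auto simp: orthogonal_def inner_commute)
    moreover have "orthogonal z y" using yz by auto
    ultimately have "z \<bullet> z = 0" using yz(3)
      by (simp add: orthogonal_def inner_add_left inner_add_right inner_commute)
    then have "z = 0" by simp
    then show "D x \<in> span (range (\<lambda>t. integral\<^sup>L \<pi> (\<lambda>x. outer (D x)) *v t))"
      using yz by (simp add: R_def Mm_def)
  qed
qed


lemma explainer_exists:
  fixes V :: "(real^'n) set"
  assumes "subspace V" "dim V \<le> CARD('k)"
  shows "\<exists>E::real^'n^'k. \<forall>h v. E *v h = 0 \<longrightarrow> v \<in> V \<longrightarrow> h \<bullet> v = 0"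
proof -
  have "dim (UNIV :: (real^'k) set) = CARD('k)" by (simp add: dim_UNIV)
  then obtain T :: "(real^'k) set" where T: "subspace T" "dim T = dim V"
    using choose_subspace_of_subspace[of "dim V" "UNIV :: (real^'k) set"] assms(2) by auto
  obtain f :: "real^'k \<Rightarrow> real^'n" where f: "linear f" "f ` T = V"
    using subspace_isomorphism[OF T(1) assms(1) T(2)] by blast
  define F where "F = matrix f"
  have Ff: "F *v t = f t" for t using matrix_vector_mul(2)[OF f(1)] by (metis F_def)
  show ?thesis
  proof (intro exI allI impI)
    fix h v assume h: "transpose F *v h = 0" and v: "v \<in> V"
    then obtain t where "v = f t" using f(2) by blast
    then have "h \<bullet> v = h \<bullet> (F *v t)" by (simp add: Ff)
    also have "\<dots> = (transpose F *v h) \<bullet> t" by (rule inner_transp)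
    finally have "h \<bullet> v = (transpose F *v h) \<bullet> t" .
    then show "h \<bullet> v = 0" using h by simp
  qed
qed

lemma agent_part:
  fixes OmU :: "real^'n^'n" and E :: "real^'n^'k"
  assumes psd: "psd_matrix OmU" and inj: "inj ((*v) OmU)"
    and orth: "\<And>h. E *v h = 0 \<Longrightarrow> h \<bullet> (OmU *v (u - w)) = 0"
  shows "{f. agent_optimal OmU u {g. E *v g = E *v w} f} = {w}"
proof -
  have sym: "transpose OmU = OmU" and nn: "\<And>z. 0 \<le> z \<bullet> (OmU *v z)"
    using psd by (auto simp: psd_matrix_def)
  define d where "d = u - w"
  have eq: "quad_payoff OmU u g = quad_payoff OmU u w - (g - w) \<bullet> (OmU *v (g - w))"
    if "E *v g = E *v w" for g
  proof -
    define h where "h = g - w"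
    have Eh: "E *v h = 0" using that by (simp add: h_def matrix_vector_mult_diff_distrib)
    have o1: "h \<bullet> (OmU *v d) = 0" using orth[OF Eh] by (simp add: d_def)
    have o2: "d \<bullet> (OmU *v h) = 0" using o1 sym_inner[OF sym, of d h] by simp
    have gu: "g - u = h - d" by (simp add: h_def d_def)
    have wu: "w - u = - d" by (simp add: d_def)
    have e1: "(h - d) \<bullet> (OmU *v (h - d)) = h \<bullet> (OmU *v h) - h \<bullet> (OmU *v d) - d \<bullet> (OmU *v h) + d \<bullet> (OmU *v d)"
      by (simp only: matrix_vector_mult_diff_distrib inner_diff_left inner_diff_right)
    have e2: "(- d) \<bullet> (OmU *v (- d)) = d \<bullet> (OmU *v d)"
      by (simp add: vec.neg)
    show ?thesis
      unfolding quad_payoff_def gu wu h_def[symmetric] e1 e2 o1 o2 by simp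
  qed
  show ?thesis
  proof (intro set_eqI iffI)
    fix f assume "f \<in> {f. agent_optimal OmU u {g. E *v g = E *v w} f}"
    then have fC: "E *v f = E *v w" and opt: "quad_payoff OmU u w \<le> quad_payoff OmU u f"
      by (auto simp: agent_optimal_def)
    have "(f - w) \<bullet> (OmU *v (f - w)) \<le> 0" using opt eq[OF fC] by simp
    then have "(f - w) \<bullet> (OmU *v (f - w)) = 0" using nn[of "f - w"] by simp
    then have "OmU *v (f - w) = 0" using psd_zero[OF psd] by blast
    then have "f - w = 0" using inj by (metis matrix_vector_mult_0_right injD)
    then show "f \<in> {w}" by simp
  next
    fix f assume "f \<in> {w}"
    then show "f \<in> {f. agent_optimal OmU u {g. E *v g = E *v w} f}"
    proof -
      have "quad_payoff OmU u g \<le> quad_payoff OmU u w" if "E *v g = E *v w" for g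
        using eq[OF that] nn[of "g - w"] by linarith
      then show ?thesis using \<open>f \<in> {w}\<close> unfolding agent_optimal_def by auto
    qed
  qed
qed

theorem proposition1:
  fixes \<pi> :: "('ty \<times> 'st \<times> 'dep) measure"
    and ubar :: "'st \<Rightarrow> 'ty \<Rightarrow> real^'n"
    and wbar :: "'st \<Rightarrow> real^'n"
    and OmU :: "real^'n^'n"
    and OmW :: "'st \<Rightarrow> real^'n^'n"
  assumes "prob_space \<pi>"
    and "psd_matrix OmU"
    and "rank OmU = CARD('n)"
    and "\<And>s. psd_matrix (OmW s)"
    and "integrable \<pi> (\<lambda>(\<theta>, s, d). outer (ubar s \<theta> - wbar s))"
    and "rank (integral\<^sup>L \<pi> (\<lambda>(\<theta>, s, d). outer (ubar s \<theta> - wbar s))) \<le> CARD('k)"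
  shows "\<exists>(E :: real^'n^'k) (e :: 'st \<Rightarrow> real^'k).
           AE x in \<pi>. (case x of (\<theta>, s, d) \<Rightarrow>
              {f. agent_optimal OmU (ubar s \<theta>) {g. E *v g = e s} f} = {wbar s}
              \<and> quad_payoff (OmW s) (wbar s) (wbar s) = 0)"
proof -
  define D where "D = (\<lambda>x::('ty \<times> 'st \<times> 'dep). case x of (\<theta>, s, d) \<Rightarrow> ubar s \<theta> - wbar s)"
  have feq: "(\<lambda>(\<theta>, s, d). outer (ubar s \<theta> - wbar s)) = (\<lambda>x. outer (D x))"
    by (auto simp: D_def fun_eq_iff split: prod.splits)
  define Mm where "Mm = integral\<^sup>L \<pi> (\<lambda>x. outer (D x))"
  have int: "integrable \<pi> (\<lambda>x. outer (D x))" using assms(5) feq by simp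
  have rk: "rank Mm \<le> CARD('k)" using assms(6) feq by (simp add: Mm_def)
  define R where "R = range (\<lambda>t. Mm *v t)"
  define V where "V = (\<lambda>x. OmU *v x) ` span R"
  have subV: "subspace V" unfolding V_def
    by (intro linear_subspace_image matrix_vector_mul_linear subspace_span)
  have "dim V \<le> dim (span R)" unfolding V_def by (intro dim_image_le matrix_vector_mul_linear)
  also have "\<dots> = rank Mm" by (simp add: dim_span R_def rank_dim_range)
  finally have dimV: "dim V \<le> CARD('k)" using rk by simp
  obtain E :: "real^'n^'k" where E: "\<And>h v. E *v h = 0 \<Longrightarrow> v \<in> V \<Longrightarrow> h \<bullet> v = 0"
    using explainer_exists[OF subV dimV] by blast
  have inj: "inj ((*v) OmU)" using assms(3) full_rank_injective by blast
  have ae: "AE x in \<pi>. D x \<in> span R"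
    using ae_in_span[OF int] by (simp add: R_def Mm_def)
  show ?thesis
  proof (intro exI)
    show "AE x in \<pi>. (case x of (\<theta>, s, d) \<Rightarrow>
              {f. agent_optimal OmU (ubar s \<theta>) {g. E *v g = E *v wbar s} f} = {wbar s}
              \<and> quad_payoff (OmW s) (wbar s) (wbar s) = 0)"
      using ae
    proof (rule AE_mp, intro AE_I2 impI)
      fix x :: "'ty \<times> 'st \<times> 'dep"
      assume Dx: "D x \<in> span R"
      obtain \<theta> s d where x: "x = (\<theta>, s, d)" by (cases x) auto
      have "OmU *v (ubar s \<theta> - wbar s) \<in> V" using Dx by (simp add: V_def D_def x)
      then have "{f. agent_optimal OmU (ubar s \<theta>) {g. E *v g = E *v wbar s} f} = {wbar s}"
        using E by (intro agent_part[OF assms(2) inj]) blast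
      then show "case x of (\<theta>, s, d) \<Rightarrow>
              {f. agent_optimal OmU (ubar s \<theta>) {g. E *v g = E *v wbar s} f} = {wbar s}
              \<and> quad_payoff (OmW s) (wbar s) (wbar s) = 0"
        by (simp add: x quad_payoff_def)
    qed
  qed
qed

end
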